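(* Assume Hypothesis 1 (stated in the context). Suppose further that $C\ne C_{\max}$, let $n$ be the integer with $|C|=n|C_{\max}|$, and let $\langle C\rangle$ be the $\mathbb F_2$-span of the codewords of $C$. Then: 1. $\mathrm{Aut}(C)\le\mathrm{Aut}(\langle C\rangle)$; 2. $\langle C\rangle$ is completely transitive; 3. the codimension of $C_{\max}$ in $\langle C\rangle$ is at least $2$ and at most $n-1$.
   Context: $H(m,2)$: vertex set $\mathbb F_2^m$, coordinates indexed by a set $M$, $|M|=m$; $d$ Hamming distance. For a code $C$: minimum distance $\delta$, covering radius $\rho=\max_\alpha d(\alpha,C)$, $C_i=\{\alpha:d(\alpha,C)=i\}$. $\mathrm{Aut}(H(m,2))=B\rtimes L$, $B\cong\mathbb Z_2^m$ translations, $L\cong\mathrm{Sym}(M)$; $\mathrm{Aut}(C)$ is the setwise stabiliser of $C$. $C$ is completely transitive if $\mathrm{Aut}(C)$ is transitive on each of $C,C_1,\dots,C_\rho$. For a linear code $D$, $T_D$ is the group of translations by elements of $D$. For $C\ni\mathbf 0$, the maximal linear subcode $C_{\max}$ is the largest linear subcode $D\subseteq C$ with $T_D\le\mathrm{Aut}(C)$. Hypothesis 1: $C$ is a completely transitive code in $H(m,2)$ with $\mathbf 0\in C$ and minimum distance $\delta\ge5$; $X=\mathrm{Aut}(C)$; $C_{\max}$ is the maximal linear subcode with minimum distance $\delta_{\max}$; $X_{\max}$ is the setwise stabiliser of $C_{\max}$ in $X$; $2\le\dim C_{\max}\le m-2$. *)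

theory Defs
  imports Main "HOL-Combinatorics.Permutations"
begin

text \<open>Vertices of H(m,2) with coordinate set M are the subsets of M
  (a subset is identified with its support / characteristic vector).
  Vector addition over F_2 is symmetric difference; the zero vector is {}.\<close>

definition vadd :: "'a set \<Rightarrow> 'a set \<Rightarrow> 'a set" where
  "vadd x y = (x - y) \<union> (y - x)"

definition hdist :: "'a set \<Rightarrow> 'a set \<Rightarrow> nat" where
  "hdist x y = card (vadd x y)"

definition is_code :: "'a set \<Rightarrow> 'a set set \<Rightarrow> bool" where
  "is_code M C \<longleftrightarrow> C \<subseteq> Pow M \<and> C \<noteq> {}"

definition min_dist :: "'a set set \<Rightarrow> nat" where
  "min_dist C = Min {hdist x y | x y. x \<in> C \<and> y \<in> C \<and> x \<noteq> y}"

definition dist_to_code :: "'a set \<Rightarrow> 'a set set \<Rightarrow> nat" where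
  "dist_to_code a C = Min {hdist a c | c. c \<in> C}"

definition covering_radius :: "'a set \<Rightarrow> 'a set set \<Rightarrow> nat" where
  "covering_radius M C = Max {dist_to_code a C | a. a \<in> Pow M}"

definition dist_class :: "'a set \<Rightarrow> 'a set set \<Rightarrow> nat \<Rightarrow> 'a set set" where
  "dist_class M C i = {a \<in> Pow M. dist_to_code a C = i}"

definition aut_H :: "'a set \<Rightarrow> ('a set \<Rightarrow> 'a set) set" where
  "aut_H M = {g. \<exists>\<sigma> b. \<sigma> permutes M \<and> b \<subseteq> M \<and> g = (\<lambda>x. vadd (\<sigma> ` x) b)}"

definition aut_code :: "'a set \<Rightarrow> 'a set set \<Rightarrow> ('a set \<Rightarrow> 'a set) set" where
  "aut_code M C = {g \<in> aut_H M. g ` C = C}"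

definition completely_transitive :: "'a set \<Rightarrow> 'a set set \<Rightarrow> bool" where
  "completely_transitive M C \<longleftrightarrow>
     (\<forall>i \<le> covering_radius M C. \<forall>a \<in> dist_class M C i. \<forall>b \<in> dist_class M C i.
        \<exists>g \<in> aut_code M C. g a = b)"

definition linear_code :: "'a set \<Rightarrow> 'a set set \<Rightarrow> bool" where
  "linear_code M D \<longleftrightarrow> D \<subseteq> Pow M \<and> {} \<in> D \<and> (\<forall>x \<in> D. \<forall>y \<in> D. vadd x y \<in> D)"

definition translation :: "'a set \<Rightarrow> 'a set \<Rightarrow> 'a set" where
  "translation d = (\<lambda>x. vadd x d)"

definition translations_in_aut :: "'a set \<Rightarrow> 'a set set \<Rightarrow> 'a set set \<Rightarrow> bool" where
  "translations_in_aut M D C \<longleftrightarrow> (\<forall>d \<in> D. translation d \<in> aut_code M C)"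

definition is_max_linear_subcode :: "'a set \<Rightarrow> 'a set set \<Rightarrow> 'a set set \<Rightarrow> bool" where
  "is_max_linear_subcode M C D \<longleftrightarrow>
     linear_code M D \<and> D \<subseteq> C \<and> translations_in_aut M D C \<and>
     (\<forall>D'. linear_code M D' \<and> D' \<subseteq> C \<and> translations_in_aut M D' C \<longrightarrow> D' \<subseteq> D)"

definition f2_span :: "'a set \<Rightarrow> 'a set set \<Rightarrow> 'a set set" where
  "f2_span M C = \<Inter> {D. linear_code M D \<and> C \<subseteq> D}"

definition code_dim :: "'a set set \<Rightarrow> nat" where
  "code_dim D = (THE k. card D = 2 ^ k)"

end

theory Submission
  imports Defs
begin


lemma vadd_comm: "vadd x y = vadd y x" unfolding vadd_def by blast
lemma vadd_assoc: "vadd (vadd x y) z = vadd x (vadd y z)" unfolding vadd_def by blast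
lemma vadd_self[simp]: "vadd x x = {}" unfolding vadd_def by blast
lemma vadd_empty[simp]: "vadd x {} = x" "vadd {} x = x" unfolding vadd_def by blast+
lemma vadd_cancel[simp]: "vadd (vadd x y) y = x" unfolding vadd_def by blast
lemma vadd_cancel2[simp]: "vadd x (vadd x y) = y" unfolding vadd_def by blast
lemma vadd_sub: "x \<subseteq> M \<Longrightarrow> y \<subseteq> M \<Longrightarrow> vadd x y \<subseteq> M" unfolding vadd_def by blast
lemma vadd_image: "inj s \<Longrightarrow> s ` vadd x y = vadd (s ` x) (s ` y)"
  unfolding vadd_def by (auto simp: inj_eq image_set_diff)
lemma vadd_inj: "inj (\<lambda>x. vadd x b)"
  by (metis injI vadd_cancel)

lemma lin_add: "linear_code M D \<Longrightarrow> x \<in> D \<Longrightarrow> y \<in> D \<Longrightarrow> vadd x y \<in> D"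
  unfolding linear_code_def by blast


lemma coset_closed:
  assumes "linear_code M H" "x \<in> H \<union> (\<lambda>z. vadd z v) ` H" "y \<in> H \<union> (\<lambda>z. vadd z v) ` H"
  shows "vadd x y \<in> H \<union> (\<lambda>z. vadd z v) ` H"
proof -
  have e1: "vadd x (vadd h v) = vadd (vadd x h) v" for x h :: "'a set" unfolding vadd_def by blast
  have e2: "vadd (vadd h v) y = vadd (vadd h y) v" for y h :: "'a set" unfolding vadd_def by blast
  have e3: "vadd (vadd h v) (vadd h' v) = vadd h h'" for h h' :: "'a set" unfolding vadd_def by blast
  obtain hx where hx: "hx \<in> H" "x = hx \<or> x = vadd hx v" using assms(2) by blast
  obtain hy where hy: "hy \<in> H" "y = hy \<or> y = vadd hy v" using assms(3) by blast
  have l: "vadd hx hy \<in> H" using lin_add[OF assms(1) hx(1) hy(1)] .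
  from hx(2) hy(2) show ?thesis
  proof (elim disjE)
    assume "x = hx" "y = hy" then show ?thesis using l by simp
  next
    assume "x = hx" "y = vadd hy v" then show ?thesis using l e1[of hx hy] by simp
  next
    assume "x = vadd hx v" "y = hy" then show ?thesis using l e2[of hx hy] by simp
  next
    assume "x = vadd hx v" "y = vadd hy v" then show ?thesis using l e3[of hx hy] by simp
  qed
qed

lemma span_lin: "C \<subseteq> Pow M \<Longrightarrow> linear_code M (f2_span M C)"
proof -
  assume C: "C \<subseteq> Pow M"
  define F where "F = {D. linear_code M D \<and> C \<subseteq> D}"
  have "linear_code M (Pow M)" unfolding linear_code_def by (auto simp: vadd_def)
  with C have ne: "Pow M \<in> F" unfolding F_def by blast
  have a: "\<Inter> F \<subseteq> Pow M" using ne by blast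
  have b: "{} \<in> \<Inter> F" unfolding F_def linear_code_def by blast
  have c: "\<forall>x\<in>\<Inter> F. \<forall>y\<in>\<Inter> F. vadd x y \<in> \<Inter> F" unfolding F_def linear_code_def by blast
  show ?thesis using a b c unfolding f2_span_def F_def[symmetric] linear_code_def[of M "\<Inter> F"] by blast
qed

lemma span_sup: "C \<subseteq> f2_span M C" unfolding f2_span_def by blast
lemma span_least: "linear_code M D \<Longrightarrow> C \<subseteq> D \<Longrightarrow> f2_span M C \<subseteq> D"
  unfolding f2_span_def by blast

lemma aut_H_inj: "g \<in> aut_H M \<Longrightarrow> inj g"
proof -
  assume "g \<in> aut_H M"
  then obtain s b where s: "s permutes M" and g: "g = (\<lambda>x. vadd (s ` x) b)"
    unfolding aut_H_def by blast
  have i: "inj s" using s by (rule permutes_inj)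
  show "inj g"
  proof (rule injI)
    fix x y assume "g x = g y"
    then have "vadd (vadd (s ` x) b) b = vadd (vadd (s ` y) b) b" unfolding g by simp
    then have "s ` x = s ` y" by (simp only: vadd_cancel)
    then show "x = y" using i by (simp add: inj_image_eq_iff)
  qed
qed

lemma aut_code_intro: "finite S \<Longrightarrow> g \<in> aut_H M \<Longrightarrow> g ` S \<subseteq> S \<Longrightarrow> g \<in> aut_code M S"
proof -
  assume a: "finite S" "g \<in> aut_H M" "g ` S \<subseteq> S"
  have "inj_on g S" using aut_H_inj[OF a(2)] inj_on_subset by blast
  then have "g ` S = S" using endo_inj_surj a by blast
  then show ?thesis unfolding aut_code_def using a by blast
qed

lemma transl_aut: "d \<subseteq> M \<Longrightarrow> translation d \<in> aut_H M"
proof -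
  assume "d \<subseteq> M"
  moreover have "translation d = (\<lambda>x. vadd (id ` x) d)" unfolding translation_def by simp
  ultimately show ?thesis unfolding aut_H_def using permutes_id by blast
qed

lemma aut_H_comp: "g1 \<in> aut_H M \<Longrightarrow> g2 \<in> aut_H M \<Longrightarrow> g1 \<circ> g2 \<in> aut_H M"
proof -
  assume "g1 \<in> aut_H M" "g2 \<in> aut_H M"
  then obtain s1 b1 s2 b2 where s1: "s1 permutes M" "b1 \<subseteq> M" "g1 = (\<lambda>x. vadd (s1 ` x) b1)"
    and s2: "s2 permutes M" "b2 \<subseteq> M" "g2 = (\<lambda>x. vadd (s2 ` x) b2)"
    unfolding aut_H_def by blast
  have i: "inj s1" using s1 by (simp add: permutes_inj)
  have "g1 \<circ> g2 = (\<lambda>x. vadd ((s1 \<circ> s2) ` x) (vadd (s1 ` b2) b1))"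
  proof
    fix x
    have "(g1 \<circ> g2) x = vadd (vadd (s1 ` s2 ` x) (s1 ` b2)) b1"
      using s1(3) s2(3) vadd_image[OF i] by simp
    also have "\<dots> = vadd ((s1 \<circ> s2) ` x) (vadd (s1 ` b2) b1)"
      by (simp only: vadd_assoc image_comp)
    finally show "(g1 \<circ> g2) x = vadd ((s1 \<circ> s2) ` x) (vadd (s1 ` b2) b1)" .
  qed
  moreover have "s1 \<circ> s2 permutes M" using s1 s2 permutes_compose by blast
  moreover have "vadd (s1 ` b2) b1 \<subseteq> M"
  proof (rule vadd_sub)
    show "s1 ` b2 \<subseteq> M" using s2(2) permutes_image[OF s1(1)] by blast
  qed (rule s1(2))
  ultimately show ?thesis unfolding aut_H_def by blast
qed

lemma dtc_le: "finite C \<Longrightarrow> c \<in> C \<Longrightarrow> dist_to_code a C \<le> hdist a c"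
  unfolding dist_to_code_def by (rule Min_le) auto

lemma dtc_ex: "finite C \<Longrightarrow> C \<noteq> {} \<Longrightarrow> \<exists>c\<in>C. dist_to_code a C = hdist a c"
proof -
  assume "finite C" "C \<noteq> {}"
  then have "Min {hdist a c |c. c \<in> C} \<in> {hdist a c |c. c \<in> C}"
    by (intro Min_in) auto
  then show ?thesis unfolding dist_to_code_def by auto
qed

lemma dtc_cr: "finite M \<Longrightarrow> a \<in> Pow M \<Longrightarrow> dist_to_code a C \<le> covering_radius M C"
  unfolding covering_radius_def by (rule Max_ge) auto

lemma lin_index:
  assumes "finite D" "linear_code M D" "linear_code M H" "H \<subseteq> D"
  shows "\<exists>j. card D = 2^j * card H"
  using assms
proof (induct "card D - card H" arbitrary: H rule: less_induct)
  case less
  show ?case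
  proof (cases "H = D")
    case True then show ?thesis by (intro exI[of _ 0]) simp
  next
    case False
    then obtain v where v: "v \<in> D" "v \<notin> H" using less(5) by blast
    define H' where "H' = H \<union> translation v ` H"
    have vM: "v \<subseteq> M" using v less(3) unfolding linear_code_def by blast
    have lin: "linear_code M H'"
      unfolding linear_code_def
    proof (intro conjI ballI)
      have "H \<subseteq> Pow M" using less(4) unfolding linear_code_def by blast
      then have HP: "H \<subseteq> Pow M" .
      show "H' \<subseteq> Pow M"
    proof
      fix x assume "x \<in> H'"
      then consider "x \<in> H" | h where "h \<in> H" "x = vadd h v" unfolding H'_def translation_def by blast
      then show "x \<in> Pow M"
      proof cases
        case 1 then show ?thesis using HP by blast
      next
        case (2 h) then have "h \<subseteq> M" using HP by blast
        then show ?thesis using 2 vadd_sub[OF _ vM] by simp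
      qed
    qed
      show "{} \<in> H'" using less(4) unfolding H'_def linear_code_def by blast
      fix x y assume "x \<in> H'" "y \<in> H'"
      then show "vadd x y \<in> H'" using coset_closed[OF less(4), of x v y] unfolding H'_def translation_def
        by blast
    qed
    have sub: "H' \<subseteq> D"
    proof
      fix x assume "x \<in> H'"
      then consider "x \<in> H" | h where "h \<in> H" "x = vadd h v" unfolding H'_def translation_def by blast
      then show "x \<in> D"
      proof cases
        case 1 then show ?thesis using less(5) by blast
      next
        case (2 h) then have "h \<in> D" using less(5) by blast
        then show ?thesis using 2 lin_add[OF less(3) _ v(1)] by simp
      qed
    qed
    have fH: "finite H" using less(2,5) finite_subset by blast
    have disj: "H \<inter> translation v ` H = {}"
    proof (rule ccontr)
      assume "H \<inter> translation v ` H \<noteq> {}"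
      then obtain h h' where "h \<in> H" "h' \<in> H" "h = vadd h' v" unfolding translation_def by blast
      then have "vadd h' h = v" by (simp only: vadd_cancel2)
      moreover have "vadd h' h \<in> H" using lin_add[OF less(4) \<open>h' \<in> H\<close> \<open>h \<in> H\<close>] .
      ultimately show False using v(2) by simp
    qed
    have cT: "card (translation v ` H) = card H"
    proof (rule card_image)
      have "inj (translation v)" unfolding translation_def by (rule vadd_inj)
      then show "inj_on (translation v) H" using inj_on_subset by blast
    qed
    have cH': "card H' = 2 * card H" unfolding H'_def
      using card_Un_disjoint[OF fH _ disj] fH cT by simp
    have "card H > 0" using fH less(4) unfolding linear_code_def by (auto simp: card_gt_0_iff)
    then have "card D - card H' < card D - card H" using card_mono[OF less(2) sub] cH' by linarith
    from less(1)[OF this less(2,3) lin sub] obtain j where "card D = 2^j * card H'" by blast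
    then show ?thesis using cH' by (intro exI[of _ "Suc j"]) simp
  qed
qed

lemma span_bound:
  assumes "finite R" "R \<subseteq> Pow M" "linear_code M H" "finite H"
  shows "\<exists>D. linear_code M D \<and> H \<subseteq> D \<and> R \<subseteq> D \<and> finite D \<and> card D \<le> 2^card R * card H"
  using assms
proof (induct R rule: finite_induct)
  case empty then show ?case by auto
next
  case (insert r R)
  then obtain D where D: "linear_code M D" "H \<subseteq> D" "R \<subseteq> D" "finite D" "card D \<le> 2^card R * card H"
    by auto
  define D' where "D' = D \<union> translation r ` D"
  have rM: "r \<subseteq> M" using insert by auto
  have lin: "linear_code M D'"
    unfolding linear_code_def
  proof (intro conjI ballI)
    have "D \<subseteq> Pow M" using D(1) unfolding linear_code_def by blast
    then have HP: "D \<subseteq> Pow M" .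
    show "D' \<subseteq> Pow M"
    proof
      fix x assume "x \<in> D'"
      then consider "x \<in> D" | h where "h \<in> D" "x = vadd h r" unfolding D'_def translation_def by blast
      then show "x \<in> Pow M"
      proof cases
        case 1 then show ?thesis using HP by blast
      next
        case (2 h) then have "h \<subseteq> M" using HP by blast
        then show ?thesis using 2 vadd_sub[OF _ rM] by simp
      qed
    qed
    show "{} \<in> D'" using D(1) unfolding D'_def linear_code_def by blast
    fix x y assume "x \<in> D'" "y \<in> D'"
    then show "vadd x y \<in> D'" using coset_closed[OF D(1), of x r y] unfolding D'_def translation_def
      by blast
  qed
  have "r \<in> D'" using D(1) unfolding D'_def translation_def linear_code_def by force
  moreover have "card D' \<le> 2 * card D" unfolding D'_def
    using card_Un_le[of D "translation r ` D"] card_image_le[OF D(4), of "translation r"] by simp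
  ultimately show ?case using D lin insert(1,2)
    by (intro exI[of _ D']) (auto simp: D'_def)
qed



lemma part1:
  assumes "C \<subseteq> Pow M" "{} \<in> C" "g \<in> aut_code M C" "finite M"
  shows "g \<in> aut_code M (f2_span M C)"
proof -
  let ?S = "f2_span M C"
  have linS: "linear_code M ?S" using span_lin[OF assms(1)] .
  have CS: "C \<subseteq> ?S" by (rule span_sup)
  have SP: "?S \<subseteq> Pow M" using linS unfolding linear_code_def by blast
  have fS: "finite ?S" using SP assms(4) finite_subset by blast
  have gH: "g \<in> aut_H M" and gC: "g ` C = C" using assms(3) unfolding aut_code_def by blast+
  then obtain s b where s: "s permutes M" "b \<subseteq> M" and g: "g = (\<lambda>x. vadd (s ` x) b)"
    unfolding aut_H_def by blast
  have i: "inj s" using s(1) by (rule permutes_inj)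
  have "g {} \<in> C" using gC assms(2) by blast
  then have bC: "b \<in> C" unfolding g by simp
  define D where "D = {x \<in> ?S. s ` x \<in> ?S}"
  have linD: "linear_code M D" unfolding linear_code_def
  proof (intro conjI ballI)
    show "D \<subseteq> Pow M" using SP unfolding D_def by blast
    show "{} \<in> D" using linS unfolding D_def linear_code_def by simp
    fix x y assume "x \<in> D" "y \<in> D"
    then have "x \<in> ?S" "y \<in> ?S" "s ` x \<in> ?S" "s ` y \<in> ?S" unfolding D_def by blast+
    then show "vadd x y \<in> D" unfolding D_def using lin_add[OF linS] vadd_image[OF i] by simp
  qed
  have "C \<subseteq> D"
  proof
    fix c assume c: "c \<in> C"
    then have "g c \<in> C" using gC by blast
    moreover have "s ` c = vadd (g c) b" unfolding g by simp
    ultimately have "s ` c \<in> ?S" using lin_add[OF linS, of "g c" b] CS bC by auto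
    then show "c \<in> D" unfolding D_def using c CS by blast
  qed
  then have "?S \<subseteq> D" by (rule span_least[OF linD])
  then have "g ` ?S \<subseteq> ?S" unfolding g D_def using lin_add[OF linS] CS bC by auto
  then show ?thesis by (rule aut_code_intro[OF fS gH])
qed

lemma part2:
  assumes "C \<subseteq> Pow M" "{} \<in> C" "finite M" "completely_transitive M C"
  shows "completely_transitive M (f2_span M C)"
  unfolding completely_transitive_def
proof (intro allI impI ballI)
  let ?S = "f2_span M C"
  have linS: "linear_code M ?S" using span_lin[OF assms(1)] .
  have CS: "C \<subseteq> ?S" by (rule span_sup)
  have SP: "?S \<subseteq> Pow M" using linS unfolding linear_code_def by blast
  have fS: "finite ?S" using SP assms(3) finite_subset by blast
  have fC: "finite C" using assms(1,3) finite_subset by blast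
  have Sne: "?S \<noteq> {}" using CS assms(2) by blast
  fix i a b assume "i \<le> covering_radius M ?S" and a: "a \<in> dist_class M ?S i" and b: "b \<in> dist_class M ?S i"
  have red: "\<exists>ca\<in>?S. vadd a ca \<in> dist_class M C i \<and> ca \<subseteq> M" if a: "a \<in> dist_class M ?S i" for a
  proof -
    have aM: "a \<subseteq> M" and ai: "dist_to_code a ?S = i" using a unfolding dist_class_def by auto
    obtain ca where ca: "ca \<in> ?S" "dist_to_code a ?S = hdist a ca" using dtc_ex[OF fS Sne] by blast
    have caM: "ca \<subseteq> M" using ca SP by blast
    let ?a = "vadd a ca"
    have "dist_to_code ?a C \<le> hdist ?a {}" by (rule dtc_le[OF fC assms(2)])
    also have "\<dots> = i" using ai ca unfolding hdist_def by simp
    finally have le: "dist_to_code ?a C \<le> i" .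
    obtain c where c: "c \<in> C" "dist_to_code ?a C = hdist ?a c" using dtc_ex[OF fC] assms(2) by blast
    have "hdist ?a c = hdist a (vadd ca c)" unfolding hdist_def by (simp only: vadd_assoc)
    moreover have "vadd ca c \<in> ?S" using lin_add[OF linS ca(1)] c CS by blast
    ultimately have "i \<le> dist_to_code ?a C" using c dtc_le[OF fS, of "vadd ca c" a] ai by simp
    with le have "dist_to_code ?a C = i" by simp
    moreover have "?a \<subseteq> M" using aM caM by (rule vadd_sub)
    ultimately show ?thesis using ca caM unfolding dist_class_def by blast
  qed
  obtain ca where ca: "ca \<in> ?S" "vadd a ca \<in> dist_class M C i" "ca \<subseteq> M" using red[OF a] by blast
  obtain cb where cb: "cb \<in> ?S" "vadd b cb \<in> dist_class M C i" "cb \<subseteq> M" using red[OF b] by blast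
  have "i \<le> covering_radius M C" using ca(2) dtc_cr[OF assms(3), of "vadd a ca" C]
    unfolding dist_class_def by auto
  then obtain g where g: "g \<in> aut_code M C" "g (vadd a ca) = vadd b cb"
    using assms(4) ca(2) cb(2) unfolding completely_transitive_def by blast
  have gS: "g \<in> aut_code M ?S" using part1[OF assms(1,2) g(1) assms(3)] .
  define h where "h = translation cb \<circ> g \<circ> translation ca"
  have hH: "h \<in> aut_H M" unfolding h_def
    using aut_H_comp[OF aut_H_comp[OF transl_aut[OF cb(3)]] transl_aut[OF ca(3)]]
      gS unfolding aut_code_def by blast
  have "h ` ?S \<subseteq> ?S"
  proof
    fix y assume "y \<in> h ` ?S"
    then obtain x where x: "x \<in> ?S" "y = h x" by blast
    have "vadd x ca \<in> ?S" using lin_add[OF linS x(1) ca(1)] .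
    then have "g (vadd x ca) \<in> ?S" using gS unfolding aut_code_def by blast
    then have "vadd (g (vadd x ca)) cb \<in> ?S" using lin_add[OF linS _ cb(1)] by blast
    then show "y \<in> ?S" using x(2) unfolding h_def translation_def by simp
  qed
  then have "h \<in> aut_code M ?S" by (rule aut_code_intro[OF fS hH])
  moreover have "h a = b" unfolding h_def translation_def using g(2) by simp
  ultimately show "\<exists>g\<in>aut_code M ?S. g a = b" by blast
qed



lemma code_dim_eq: "card D = 2 ^ k \<Longrightarrow> code_dim D = k"
  unfolding code_dim_def by (rule the_equality) auto

lemma transl_mem: "is_max_linear_subcode M C Cmax \<Longrightarrow> d \<in> Cmax \<Longrightarrow> c \<in> C \<Longrightarrow> vadd c d \<in> C"
proof -
  assume a: "is_max_linear_subcode M C Cmax" "d \<in> Cmax" "c \<in> C"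
  then have "translation d \<in> aut_code M C"
    unfolding is_max_linear_subcode_def translations_in_aut_def by blast
  then have "translation d ` C = C" unfolding aut_code_def by blast
  then show ?thesis using a(3) unfolding translation_def by blast
qed

lemma coset_sub:
  assumes "linear_code M H" "d1 \<in> H" "d2 \<in> H" "vadd d1 c1 = vadd d2 c2"
  shows "translation c1 ` H \<subseteq> translation c2 ` H"
proof
  fix y assume "y \<in> translation c1 ` H"
  then obtain d where d: "d \<in> H" "y = vadd d c1" unfolding translation_def by blast
  have "c1 = vadd d1 (vadd d2 c2)" using assms(4) by (metis vadd_cancel2)
  then have "y = vadd (vadd (vadd d d1) d2) c2" using d(2) by (simp only: vadd_assoc)
  moreover have "vadd (vadd d d1) d2 \<in> H" using lin_add[OF assms(1) lin_add[OF assms(1) d(1) assms(2)] assms(3)] .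
  ultimately show "y \<in> translation c2 ` H" unfolding translation_def by blast
qed

lemma part3:
  assumes fM: "finite M" and CP: "C \<subseteq> Pow M" and e: "{} \<in> C"
    and mx: "is_max_linear_subcode M C Cmax"
    and ne: "C \<noteq> Cmax" and cn: "card C = n * card Cmax"
  shows "2 \<le> code_dim (f2_span M C) - code_dim Cmax
       \<and> code_dim (f2_span M C) - code_dim Cmax \<le> n - 1"
proof -
  let ?S = "f2_span M C"
  have linS: "linear_code M ?S" using span_lin[OF CP] .
  have CS: "C \<subseteq> ?S" by (rule span_sup)
  have SP: "?S \<subseteq> Pow M" using linS unfolding linear_code_def by blast
  have fS: "finite ?S" using SP fM finite_subset by blast
  have fC: "finite C" using CP fM finite_subset by blast
  have linX: "linear_code M Cmax" and XC: "Cmax \<subseteq> C" and trX: "translations_in_aut M Cmax C"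
    using mx unfolding is_max_linear_subcode_def by blast+
  have fX: "finite Cmax" using XC fC finite_subset by blast
  have XS: "Cmax \<subseteq> ?S" using XC CS by blast
  have lin0: "linear_code M {{}}" unfolding linear_code_def by simp
  have "{{}} \<subseteq> Cmax" using linX unfolding linear_code_def by blast
  from lin_index[OF fX linX lin0 this] obtain k0 where k0: "card Cmax = 2 ^ k0" by auto
  from lin_index[OF fS linS linX XS] obtain j where j: "card ?S = 2 ^ j * card Cmax" by blast
  have dX: "code_dim Cmax = k0" using k0 by (rule code_dim_eq)
  have "card ?S = 2 ^ (j + k0)" using j k0 by (simp add: power_add)
  then have dS: "code_dim ?S = j + k0" by (rule code_dim_eq)
  have cX0: "card Cmax > 0" using k0 by simp
  have j0: "j \<noteq> 0"
  proof
    assume "j = 0"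
    then have "card ?S = card Cmax" using j by simp
    then have "Cmax = ?S" using card_subset_eq[OF fS XS] by simp
    then show False using XC CS ne by blast
  qed
  have j1: "j \<noteq> 1"
  proof
    assume "j = 1"
    then have cS: "card ?S = 2 * card Cmax" using j by simp
    obtain c where c: "c \<in> C" "c \<notin> Cmax" using XC ne by blast
    define T where "T = Cmax \<union> translation c ` Cmax"
    have TC: "T \<subseteq> C"
    proof
      fix x assume "x \<in> T"
      then consider "x \<in> Cmax" | d where "d \<in> Cmax" "x = vadd d c" unfolding T_def translation_def by blast
      then show "x \<in> C"
      proof cases
        case 1 then show ?thesis using XC by blast
      next
        case (2 d) then show ?thesis using transl_mem[OF mx 2(1) c(1)] by (simp add: vadd_comm)
      qed
    qed
    have disj: "Cmax \<inter> translation c ` Cmax = {}"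
    proof (rule ccontr)
      assume "Cmax \<inter> translation c ` Cmax \<noteq> {}"
      then obtain d where d: "d \<in> Cmax" "vadd d c \<in> Cmax" unfolding translation_def by blast
      have "vadd d (vadd d c) \<in> Cmax" using lin_add[OF linX d(1) d(2)] .
      then show False using c(2) by simp
    qed
    have cT: "card (translation c ` Cmax) = card Cmax"
    proof (rule card_image)
      have "inj (translation c)" unfolding translation_def by (rule vadd_inj)
      then show "inj_on (translation c) Cmax" using inj_on_subset by blast
    qed
    have "card T = 2 * card Cmax" unfolding T_def
      using card_Un_disjoint[OF fX _ disj] fX cT by simp
    then have "card ?S \<le> card C" using card_mono[OF fC TC] cS by simp
    then have CeS: "C = ?S" using card_seteq[OF fS CS] by simp
    have linC: "linear_code M C" using linS CeS by simp
    have "translations_in_aut M C C" unfolding translations_in_aut_def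
    proof
      fix d assume d: "d \<in> C"
      have "translation d ` C \<subseteq> C" unfolding translation_def using lin_add[OF linC _ d] by blast
      moreover have "d \<subseteq> M" using d CP by blast
      ultimately show "translation d \<in> aut_code M C" using aut_code_intro[OF fC transl_aut] by blast
    qed
    then have "C \<subseteq> Cmax" using mx linC unfolding is_max_linear_subcode_def by blast
    then show False using XC ne by blast
  qed
  define Q where "Q = (\<lambda>c. translation c ` Cmax) ` C"
  have qC: "q \<subseteq> C" if qQ: "q \<in> Q" for q
  proof
    fix x assume "x \<in> q"
    then obtain c d where "c \<in> C" "d \<in> Cmax" "x = vadd d c"
      using qQ unfolding Q_def translation_def by blast
    then show "x \<in> C" using transl_mem[OF mx, of d c] vadd_comm[of d c] by simp
  qed
  have qcard: "card q = card Cmax" if "q \<in> Q" for q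
  proof -
    obtain c where q: "q = translation c ` Cmax" using \<open>q \<in> Q\<close> unfolding Q_def by blast
    have "inj (translation c)" unfolding translation_def by (rule vadd_inj)
    then have "inj_on (translation c) Cmax" using inj_on_subset by blast
    then show ?thesis using q card_image by blast
  qed
  have qdisj: "q1 \<inter> q2 = {}" if "q1 \<in> Q" "q2 \<in> Q" "q1 \<noteq> q2" for q1 q2
  proof (rule ccontr)
    assume "q1 \<inter> q2 \<noteq> {}"
    obtain c1 where c1: "q1 = translation c1 ` Cmax" using \<open>q1 \<in> Q\<close> unfolding Q_def by blast
    obtain c2 where c2: "q2 = translation c2 ` Cmax" using \<open>q2 \<in> Q\<close> unfolding Q_def by blast
    obtain d1 d2 where d: "d1 \<in> Cmax" "d2 \<in> Cmax" "vadd d1 c1 = vadd d2 c2"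
      using \<open>q1 \<inter> q2 \<noteq> {}\<close> unfolding c1 c2 translation_def by blast
    have "q1 \<subseteq> q2" unfolding c1 c2 using coset_sub[OF linX d] .
    moreover have "q2 \<subseteq> q1" unfolding c1 c2 using coset_sub[OF linX d(2,1) d(3)[symmetric]] .
    ultimately show False using \<open>q1 \<noteq> q2\<close> by blast
  qed
  have UQ: "\<Union>Q = C"
  proof
    show "\<Union>Q \<subseteq> C" using qC by blast
    show "C \<subseteq> \<Union>Q"
    proof
      fix c assume "c \<in> C"
      moreover have "c \<in> translation c ` Cmax" using linX unfolding translation_def linear_code_def by force
      ultimately show "c \<in> \<Union>Q" unfolding Q_def by blast
    qed
  qed
  have fQ: "finite Q" unfolding Q_def using fC by simp
  have "card Cmax * card Q = card (\<Union>Q)"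
    by (rule card_partition) (use fQ UQ fC qcard qdisj in auto)
  then have "card Cmax * card Q = n * card Cmax" using UQ cn by simp
  then have cQ: "card Q = n" using cX0 by simp
  have XQ: "Cmax \<in> Q"
  proof -
    have "translation {} ` Cmax = Cmax" unfolding translation_def by simp
    then have "Cmax = (\<lambda>c. translation c ` Cmax) {}" by simp
    then show ?thesis unfolding Q_def using e by (rule image_eqI)
  qed
  define R where "R = (\<lambda>q. SOME c. c \<in> q) ` (Q - {Cmax})"
  have fR: "finite R" unfolding R_def using fQ by simp
  have cR: "card R \<le> n - 1"
  proof -
    have "card R \<le> card (Q - {Cmax})" unfolding R_def by (rule card_image_le) (use fQ in simp)
    also have "\<dots> = n - 1" using XQ fQ cQ by simp
    finally show ?thesis .
  qed
  have qne: "q \<noteq> {}" if "q \<in> Q" for q using that qcard cX0 by fastforce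
  have Rin: "(SOME c. c \<in> q) \<in> q" if "q \<in> Q" for q using qne[OF that] by (simp add: some_in_eq)
  have RC: "R \<subseteq> C" unfolding R_def using Rin qC by blast
  have RP: "R \<subseteq> Pow M" using RC CP by blast
  obtain D where D: "linear_code M D" "Cmax \<subseteq> D" "R \<subseteq> D" "finite D" "card D \<le> 2^card R * card Cmax"
    using span_bound[OF fR RP linX fX] by blast
  have "C \<subseteq> D"
  proof
    fix c assume c: "c \<in> C"
    define q where "q = translation c ` Cmax"
    have qQ: "q \<in> Q" unfolding q_def Q_def using c by blast
    have cq: "c \<in> q" using linX unfolding q_def translation_def linear_code_def by force
    show "c \<in> D"
    proof (cases "q = Cmax")
      case True then show ?thesis using cq D(2) by blast
    next
      case False
      let ?r = "SOME c. c \<in> q"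
      have "?r \<in> R" unfolding R_def using qQ False by blast
      then have rD: "?r \<in> D" using D(3) by blast
      have "?r \<in> q" using Rin[OF qQ] .
      then obtain d where d: "d \<in> Cmax" "?r = vadd d c" unfolding q_def translation_def by blast
      have "vadd d ?r = c" using d(2) by simp
      moreover have "vadd d ?r \<in> D" using lin_add[OF D(1) _ rD] d(1) D(2) by blast
      ultimately show ?thesis by simp
    qed
  qed
  then have "?S \<subseteq> D" by (rule span_least[OF D(1)])
  then have "card ?S \<le> card D" using card_mono[OF D(4)] by blast
  also have "\<dots> \<le> 2^card R * card Cmax" using D(5) .
  also have "\<dots> \<le> 2^(n-1) * card Cmax" using cR by (simp add: power_increasing)
  finally have "2 ^ j * card Cmax \<le> 2^(n-1) * card Cmax" using j by simp
  then have "(2::nat) ^ j \<le> 2^(n-1)" using cX0 by simp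
  then have "j \<le> n - 1" by (simp add: power_le_imp_le_exp)
  then show ?thesis using dS dX j0 j1 by simp
qed


theorem lemma2p10:
  fixes M :: "'a set" and C Cmax :: "'a set set" and n :: nat
  assumes "finite M"
    and "is_code M C"
    and "completely_transitive M C"
    and "{} \<in> C"
    and "min_dist C \<ge> 5"
    and "is_max_linear_subcode M C Cmax"
    and "2 \<le> code_dim Cmax" and "code_dim Cmax \<le> card M - 2"
    and "C \<noteq> Cmax"
    and "card C = n * card Cmax"
  shows "aut_code M C \<subseteq> aut_code M (f2_span M C)
       \<and> completely_transitive M (f2_span M C)
       \<and> 2 \<le> code_dim (f2_span M C) - code_dim Cmax
       \<and> code_dim (f2_span M C) - code_dim Cmax \<le> n - 1"
proof -
  have CP: "C \<subseteq> Pow M" using assms(2) unfolding is_code_def by blast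
  have "aut_code M C \<subseteq> aut_code M (f2_span M C)"
    using part1[OF CP assms(4) _ assms(1)] by blast
  moreover have "completely_transitive M (f2_span M C)"
    by (rule part2[OF CP assms(4) assms(1) assms(3)])
  moreover have "2 \<le> code_dim (f2_span M C) - code_dim Cmax
       \<and> code_dim (f2_span M C) - code_dim Cmax \<le> n - 1"
    by (rule part3[OF assms(1) CP assms(4) assms(6) assms(9) assms(10)])
  ultimately show ?thesis by blast
qed

end
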